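(* There exists an ultragraph $\mathcal G'$ (with no sinks) whose ultragraph shift space $X'$ is countable and contains a DC1 pair (for a suitable enumeration of the ultrapaths defining the metric); in particular $X'$ has a DC1 pair but no uncountable DC1 set (and is not Li–Yorke chaotic). Concretely, $\mathcal G'$ can be taken with vertices $\{v_n\}_{n\ge0}$, edges $\{e_n\}_{n\ge0}$, $s(e_n)=v_n$ for all $n\ge0$, $r(e_n)=\{v_{n+1}\}$ for $n\ge1$, and $r(e_0)=A$ where $A=\bigcup_{i\ge1}V_i$, $V_1=\{v_1,\dots,v_{k_1}\}$, $V_n=\{v_{t_n+1},\dots,v_{t_n+k_n}\}$ with $t_n=\sum_{i=1}^{n-1}(k_i+\ell_i)$ for $n>1$, for suitably chosen sequences of positive integers $(k_n)$, $(\ell_n)$; the DC1 pair is $(e_1e_2e_3\dots,\ A)$.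
   Context: An ultragraph $\mathcal G=(G^0,\mathcal G^1,r,s)$ consists of countable sets $G^0$ (vertices) and $\mathcal G^1$ (edges), a map $s:\mathcal G^1\to G^0$ and a map $r:\mathcal G^1\to P(G^0)\setminus\{\emptyset\}$. Standing assumption: $\mathcal G$ has no sinks, i.e. $s^{-1}(v)\neq\emptyset$ for every $v\in G^0$. $\mathcal G^0$ is the smallest subset of $P(G^0)$ containing $\{v\}$ for all $v\in G^0$ and $r(e)$ for all $e\in\mathcal G^1$, and closed under finite unions and nonempty finite intersections. A finite path is either an element of $\mathcal G^0$ (length $0$) or a sequence of edges $e_1\dots e_k$ with $s(e_{i+1})\in r(e_i)$ (length $k$); an infinite path is a sequence $e_1e_2\dots$ of edges with $s(e_{i+1})\in r(e_i)$ for all $i$, and $\mathfrak p^\infty$ is the set of infinite paths. The set of ultrapaths $\mathfrak p$ consists of all $A\in\mathcal G^0$ (length $0$) and all pairs $(\alpha,A)$ with $\alpha=e_1\dots e_k$ a finite path, $k\ge1$, $A\in\mathcal G^0$, $A\subseteq r(e_k)$ (length $k$). A set $A\in\mathcal G^0$ is an infinite emitter if $\{e\in\mathcal G^1:s(e)\in A\}$ is infinite, and a minimal infinite emitter if moreover no proper subset of $A$ belonging to $\mathcal G^0$ is an infinite emitter. The ultragraph shift space is $X=\mathfrak p^\infty\cup X_{fin}$, where $X_{fin}$ consists of all $(\alpha,A)\in\mathfrak p$ with $|\alpha|\ge1$ and $A$ a minimal infinite emitter contained in $r(\alpha)$, together with all minimal infinite emitters $A\in\mathcal G^0$. An ultrapath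 $p$ is an initial segment of $x\in X$ when: if $p=A\in\mathcal G^0$, then either $x$ has length $\ge1$ and its first edge has source in $A$, or $x=B\in\mathcal G^0$ with $B\subseteq A$; if $p=(\alpha,A)$ with $|\alpha|\ge1$, then the first $|\alpha|$ edges of $x$ form $\alpha$ and either $x$ has length $>|\alpha|$ and its $(|\alpha|+1)$-th edge has source in $A$, or $x=(\alpha,B)$ with $B\subseteq A$. Fix an enumeration $\mathfrak p=\{p_1,p_2,\dots\}$; the metric on $X$ is $d(x,x)=0$ and, for $x\neq y$, $d(x,y)=2^{-i}$ where $i$ is the least index such that $p_i$ is an initial segment of exactly one of $x,y$. The shift map $\sigma:X\to X$ is $\sigma(\gamma_1\gamma_2\dots)=\gamma_2\gamma_3\dots$, $\sigma((\gamma_1\dots\gamma_n,A))=(\gamma_2\dots\gamma_n,A)$ if $n>1$, $\sigma((\gamma_1,A))=A$, $\sigma(A)=A$. For $\delta>0$, $n\ge1$, $\Phi(n,\delta,x,y)=\frac{\#\{0\le k\le n: d(\sigma^k(x),\sigma^k(y))<\delta\}}{n}$. A pair $(x,y)$ is a DC1 pair if $\limsup_n\Phi(n,\delta,x,y)=1$ for all $\delta>0$ and $\liminf_n\Phi(n,\delta_0,x,y)=0$ for some $\delta_0>0$; a DC1 set is a set in which every pair of distinct points is a DC1 pair. A scrambled (Li–Yorke) pair satisfies $\liminf_n d(\sigma^n x,\sigma^n y)=0<\limsup_n d(\sigma^n x,\sigma^n y)$, and $X$ is Li–Yorke chaotic if it has an uncountable set all of whose distinct pairs are scrambled. *)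

theory Defs
  imports Complex_Main "HOL-Library.Liminf_Limsup" "HOL-Library.Countable_Set" "HOL-Library.Extended_Real"
begin

record ('v, 'e) ultragraph =
  verts :: "'v set"
  edges :: "'e set"
  rng   :: "'e \<Rightarrow> 'v set"
  src   :: "'e \<Rightarrow> 'v"

definition is_ultragraph :: "('v, 'e) ultragraph \<Rightarrow> bool" where
  "is_ultragraph G \<longleftrightarrow> countable (verts G) \<and> countable (edges G) \<and>
     (\<forall>e\<in>edges G. src G e \<in> verts G \<and> rng G e \<subseteq> verts G \<and> rng G e \<noteq> {})"

definition no_sinks :: "('v, 'e) ultragraph \<Rightarrow> bool" where
  "no_sinks G \<longleftrightarrow> (\<forall>v\<in>verts G. \<exists>e\<in>edges G. src G e = v)"

inductive_set G0 :: "('v, 'e) ultragraph \<Rightarrow> 'v set set" for G where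
  sing: "v \<in> verts G \<Longrightarrow> {v} \<in> G0 G"
| rng:  "e \<in> edges G \<Longrightarrow> rng G e \<in> G0 G"
| un:   "A \<in> G0 G \<Longrightarrow> B \<in> G0 G \<Longrightarrow> A \<union> B \<in> G0 G"
| int:  "A \<in> G0 G \<Longrightarrow> B \<in> G0 G \<Longrightarrow> A \<inter> B \<in> G0 G"

definition fin_path :: "('v, 'e) ultragraph \<Rightarrow> 'e list \<Rightarrow> bool" where
  "fin_path G \<alpha> \<longleftrightarrow> \<alpha> \<noteq> [] \<and> set \<alpha> \<subseteq> edges G \<and>
     (\<forall>i. Suc i < length \<alpha> \<longrightarrow> src G (\<alpha> ! Suc i) \<in> rng G (\<alpha> ! i))"

definition inf_path :: "('v, 'e) ultragraph \<Rightarrow> (nat \<Rightarrow> 'e) \<Rightarrow> bool" where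
  "inf_path G x \<longleftrightarrow> (\<forall>i. x i \<in> edges G) \<and> (\<forall>i. src G (x (Suc i)) \<in> rng G (x i))"

text \<open>Ultrapaths: \<open>UVert A\<close> (length 0) or \<open>UPath \<alpha> A\<close> with \<open>|\<alpha>| \<ge> 1\<close>.\<close>
datatype ('v, 'e) upath = UVert "'v set" | UPath "'e list" "'v set"

definition ultrapaths :: "('v, 'e) ultragraph \<Rightarrow> ('v, 'e) upath set" where
  "ultrapaths G = {UVert A | A. A \<in> G0 G} \<union>
     {UPath \<alpha> A | \<alpha> A. fin_path G \<alpha> \<and> A \<in> G0 G \<and> A \<subseteq> rng G (last \<alpha>)}"

definition inf_emitter :: "('v, 'e) ultragraph \<Rightarrow> 'v set \<Rightarrow> bool" where
  "inf_emitter G A \<longleftrightarrow> A \<in> G0 G \<and> infinite {e \<in> edges G. src G e \<in> A}"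

definition min_inf_emitter :: "('v, 'e) ultragraph \<Rightarrow> 'v set \<Rightarrow> bool" where
  "min_inf_emitter G A \<longleftrightarrow> inf_emitter G A \<and> (\<forall>B\<in>G0 G. B \<subset> A \<longrightarrow> \<not> inf_emitter G B)"

text \<open>Points of the shift space: infinite paths \<open>PInf x\<close>, and finite elements
  \<open>PFin \<alpha> A\<close>, where \<open>PFin [] A\<close> stands for the element \<open>A \<in> \<G>^0\<close> of length 0.\<close>
datatype ('v, 'e) point = PInf "nat \<Rightarrow> 'e" | PFin "'e list" "'v set"

definition shift_space :: "('v, 'e) ultragraph \<Rightarrow> ('v, 'e) point set" where
  "shift_space G = {PInf x | x. inf_path G x} \<union>
     {PFin \<alpha> A | \<alpha> A. fin_path G \<alpha> \<and> min_inf_emitter G A \<and> A \<subseteq> rng G (last \<alpha>)} \<union>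
     {PFin [] A | A. min_inf_emitter G A}"

fun has_edge :: "('v, 'e) point \<Rightarrow> nat \<Rightarrow> bool" where
  "has_edge (PInf x) i = True"
| "has_edge (PFin \<alpha> A) i = (i < length \<alpha>)"

fun edge_at :: "('v, 'e) point \<Rightarrow> nat \<Rightarrow> 'e" where
  "edge_at (PInf x) i = x i"
| "edge_at (PFin \<alpha> A) i = \<alpha> ! i"

text \<open>\<open>is_init G p x\<close>: the ultrapath \<open>p\<close> is an initial segment of \<open>x\<close> (edges indexed from 0).\<close>
fun is_init :: "('v, 'e) ultragraph \<Rightarrow> ('v, 'e) upath \<Rightarrow> ('v, 'e) point \<Rightarrow> bool" where
  "is_init G (UVert A) x \<longleftrightarrow>
     (has_edge x 0 \<and> src G (edge_at x 0) \<in> A) \<or> (\<exists>B. x = PFin [] B \<and> B \<subseteq> A)"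
| "is_init G (UPath \<alpha> A) x \<longleftrightarrow>
     (\<forall>i<length \<alpha>. has_edge x i \<and> edge_at x i = \<alpha> ! i) \<and>
     ((has_edge x (length \<alpha>) \<and> src G (edge_at x (length \<alpha>)) \<in> A) \<or> (\<exists>B. x = PFin \<alpha> B \<and> B \<subseteq> A))"

definition enumeration :: "('v, 'e) ultragraph \<Rightarrow> (nat \<Rightarrow> ('v, 'e) upath) \<Rightarrow> bool" where
  "enumeration G p \<longleftrightarrow> bij_betw p {1..} (ultrapaths G)"

definition udist :: "('v, 'e) ultragraph \<Rightarrow> (nat \<Rightarrow> ('v, 'e) upath) \<Rightarrow>
    ('v, 'e) point \<Rightarrow> ('v, 'e) point \<Rightarrow> real" where
  "udist G p x y = (if x = y then 0 else
     (1/2) ^ (LEAST i. 1 \<le> i \<and> is_init G (p i) x \<noteq> is_init G (p i) y))"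

fun ushift :: "('v, 'e) point \<Rightarrow> ('v, 'e) point" where
  "ushift (PInf x) = PInf (\<lambda>n. x (Suc n))"
| "ushift (PFin (a # \<alpha>) A) = PFin \<alpha> A"
| "ushift (PFin [] A) = PFin [] A"

definition Phi :: "('v, 'e) ultragraph \<Rightarrow> (nat \<Rightarrow> ('v, 'e) upath) \<Rightarrow> nat \<Rightarrow> real \<Rightarrow>
    ('v, 'e) point \<Rightarrow> ('v, 'e) point \<Rightarrow> real" where
  "Phi G p n \<delta> x y =
     real (card {k. k \<le> n \<and> udist G p ((ushift ^^ k) x) ((ushift ^^ k) y) < \<delta>}) / real n"

definition DC1_pair :: "('v, 'e) ultragraph \<Rightarrow> (nat \<Rightarrow> ('v, 'e) upath) \<Rightarrow>
    ('v, 'e) point \<Rightarrow> ('v, 'e) point \<Rightarrow> bool" where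
  "DC1_pair G p x y \<longleftrightarrow>
     (\<forall>\<delta>>0. limsup (\<lambda>n. ereal (Phi G p n \<delta> x y)) = 1) \<and>
     (\<exists>\<delta>0>0. liminf (\<lambda>n. ereal (Phi G p n \<delta>0 x y)) = 0)"

definition DC1_set :: "('v, 'e) ultragraph \<Rightarrow> (nat \<Rightarrow> ('v, 'e) upath) \<Rightarrow>
    ('v, 'e) point set \<Rightarrow> bool" where
  "DC1_set G p S \<longleftrightarrow> (\<forall>x\<in>S. \<forall>y\<in>S. x \<noteq> y \<longrightarrow> DC1_pair G p x y)"

definition scrambled_pair :: "('v, 'e) ultragraph \<Rightarrow> (nat \<Rightarrow> ('v, 'e) upath) \<Rightarrow>
    ('v, 'e) point \<Rightarrow> ('v, 'e) point \<Rightarrow> bool" where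
  "scrambled_pair G p x y \<longleftrightarrow>
     liminf (\<lambda>n. ereal (udist G p ((ushift ^^ n) x) ((ushift ^^ n) y))) = 0 \<and>
     0 < limsup (\<lambda>n. ereal (udist G p ((ushift ^^ n) x) ((ushift ^^ n) y)))"

definition li_yorke_chaotic :: "('v, 'e) ultragraph \<Rightarrow> (nat \<Rightarrow> ('v, 'e) upath) \<Rightarrow> bool" where
  "li_yorke_chaotic G p \<longleftrightarrow> (\<exists>S \<subseteq> shift_space G. uncountable S \<and>
     (\<forall>x\<in>S. \<forall>y\<in>S. x \<noteq> y \<longrightarrow> scrambled_pair G p x y))"

section \<open>The concrete ultragraph (vertex v_n = n, edge e_n = n)\<close>

definition tt :: "(nat \<Rightarrow> nat) \<Rightarrow> (nat \<Rightarrow> nat) \<Rightarrow> nat \<Rightarrow> nat" where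
  "tt k l n = (\<Sum>i\<in>{1..<n}. k i + l i)"

definition VV :: "(nat \<Rightarrow> nat) \<Rightarrow> (nat \<Rightarrow> nat) \<Rightarrow> nat \<Rightarrow> nat set" where
  "VV k l n = {tt k l n + 1 .. tt k l n + k n}"

definition AA :: "(nat \<Rightarrow> nat) \<Rightarrow> (nat \<Rightarrow> nat) \<Rightarrow> nat set" where
  "AA k l = (\<Union>n\<in>{1..}. VV k l n)"

definition exG :: "(nat \<Rightarrow> nat) \<Rightarrow> (nat \<Rightarrow> nat) \<Rightarrow> (nat, nat) ultragraph" where
  "exG k l = \<lparr> verts = UNIV, edges = UNIV,
              rng = (\<lambda>e. if e = 0 then AA k l else {Suc e}), src = (\<lambda>e. e) \<rparr>"

end

theory Submission
  imports Defs
begin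


fun T :: "nat \<Rightarrow> nat" where
  "T 0 = 0"
| "T (Suc n) = T n + n * (T n + 1) + n * (T n + n * (T n + 1) + 1)"

definition kk :: "nat \<Rightarrow> nat" where "kk n = n * (T n + 1)"
definition ll :: "nat \<Rightarrow> nat" where "ll n = n * (T n + kk n + 1)"

lemma T_Suc': "T (Suc n) = T n + kk n + ll n"
  by (simp add: kk_def ll_def)

declare T.simps(2)[simp del]

lemma kk_pos: "n \<ge> 1 \<Longrightarrow> kk n \<ge> n" by (simp add: kk_def)
lemma ll_pos: "n \<ge> 1 \<Longrightarrow> ll n \<ge> n" by (simp add: ll_def)

lemma tt_T: "tt kk ll n = T n"
proof (induction n)
  case 0 then show ?case by (simp add: tt_def)
next
  case (Suc n)
  show ?case
  proof (cases "n = 0")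
    case True then show ?thesis by (simp add: tt_def T_Suc' kk_def ll_def)
  next
    case False
    then have "{1..<Suc n} = insert n {1..<n}" by auto
    then have "tt kk ll (Suc n) = kk n + ll n + tt kk ll n"
      by (simp add: tt_def)
    then show ?thesis using Suc T_Suc' by simp
  qed
qed

lemma T_mono: "m \<le> n \<Longrightarrow> T m \<le> T n"
  by (rule lift_Suc_mono_le[of T]) (auto simp: T_Suc')

lemma AA_iff: "x \<in> AA kk ll \<longleftrightarrow> (\<exists>n\<ge>1. T n < x \<and> x \<le> T n + kk n)"
  unfolding AA_def VV_def tt_T by (fastforce simp: Suc_le_eq)

lemma zero_notin: "0 \<notin> AA kk ll"
  by (auto simp: AA_iff)

lemma block_le: "i \<le> n \<Longrightarrow> T i + kk i \<le> T n + kk n"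
proof -
  assume "i \<le> n"
  then consider "i = n" | "Suc i \<le> n" by linarith
  then show ?thesis
  proof cases
    case 2
    have "T i + kk i \<le> T (Suc i)" by (simp add: T_Suc')
    also have "\<dots> \<le> T n" using 2 T_mono by blast
    finally show ?thesis by simp
  qed simp
qed

lemma T_ge: "T n + 1 \<ge> n"
proof (induction n)
  case (Suc n)
  show ?case
  proof (cases "n = 0")
    case False
    then have "kk n \<ge> 1" using kk_pos[of n] by simp
    then show ?thesis using Suc by (simp add: T_Suc')
  qed simp
qed simp

lemma AA_infinite: "infinite (AA kk ll)"
  unfolding infinite_nat_iff_unbounded_le
proof
  fix m
  have k1: "kk (Suc m) \<ge> 1" using kk_pos[of "Suc m"] by simp
  have "T (Suc m) + 1 \<in> AA kk ll"
    unfolding AA_iff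
  proof (rule exI[of _ "Suc m"])
    show "Suc m \<ge> 1 \<and> T (Suc m) < T (Suc m) + 1 \<and> T (Suc m) + 1 \<le> T (Suc m) + kk (Suc m)"
      using k1 by simp
  qed
  moreover have "m \<le> T (Suc m) + 1" using T_ge[of "Suc m"] by simp
  ultimately show "\<exists>n\<ge>m. n \<in> AA kk ll" by blast
qed

lemma count_low:
  assumes n: "n \<ge> 1"
  defines "m \<equiv> T (Suc n) - 1"
  shows "card {k. k \<le> m \<and> Suc k \<in> AA kk ll} \<le> T n + kk n"
    and "n * (T n + kk n) \<le> m"
proof -
  have "{k. k \<le> m \<and> Suc k \<in> AA kk ll} \<subseteq> {..< T n + kk n}"
  proof
    fix k assume "k \<in> {k. k \<le> m \<and> Suc k \<in> AA kk ll}"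
    then obtain i where k: "k \<le> m" "i \<ge> 1" "T i < Suc k" "Suc k \<le> T i + kk i"
      by (auto simp: AA_iff)
    have "i \<le> n"
    proof (rule ccontr)
      assume "\<not> i \<le> n"
      then have "T (Suc n) \<le> T i" using T_mono by simp
      moreover have "T (Suc n) \<ge> 1" using ll_pos[OF n] n by (simp add: T_Suc')
      ultimately show False using k unfolding m_def by linarith
    qed
    then show "k \<in> {..< T n + kk n}" using block_le[of i n] k by simp
  qed
  then show "card {k. k \<le> m \<and> Suc k \<in> AA kk ll} \<le> T n + kk n"
    using card_mono[OF finite_lessThan] by fastforce
  have "T (Suc n) = (T n + kk n) + n * (T n + kk n) + n"
    unfolding T_Suc' ll_def by (simp add: algebra_simps)
  then show "n * (T n + kk n) \<le> m"
    unfolding m_def using n by linarith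
qed

lemma count_low_eps:
  assumes e: "e > 0"
  shows "\<exists>m\<ge>M. real (card {k. k \<le> m \<and> Suc k \<in> AA kk ll}) / real m \<le> e"
proof -
  obtain n0 :: nat where n0: "1 / e < n0" using reals_Archimedean2 by blast
  define n where "n = max (max n0 M) 1"
  have n1: "n \<ge> 1" and nM: "n \<ge> M" and nn0: "n \<ge> n0" by (auto simp: n_def)
  define m where "m = T (Suc n) - 1"
  define S where "S = T n + kk n"
  have c: "card {k. k \<le> m \<and> Suc k \<in> AA kk ll} \<le> S" and nm: "n * S \<le> m"
    using count_low[OF n1] unfolding m_def S_def by auto
  have S1: "S \<ge> 1" using kk_pos[OF n1] n1 by (simp add: S_def)
  have "n \<le> n * S" using S1 by simp
  then have mM: "m \<ge> M" and mpos: "m > 0" using nm nM n1 by linarith+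
  have "1 / e < real n" using n0 nn0 by linarith
  then have ne: "1 < real n * e" using e by (simp add: field_simps)
  have "real (card {k. k \<le> m \<and> Suc k \<in> AA kk ll}) * real n \<le> real S * real n"
    using c by (simp add: mult_right_mono)
  also have "\<dots> \<le> real m" using nm by (metis mult.commute of_nat_le_iff of_nat_mult)
  also have "\<dots> = real m * 1" by simp
  also have "\<dots> \<le> real m * (real n * e)" using ne by (intro mult_left_mono) auto
  also have "\<dots> = e * real m * real n" by (simp add: ac_simps)
  finally have cm0: "real (card {k. k \<le> m \<and> Suc k \<in> AA kk ll}) * real n \<le> e * real m * real n" .
  have np: "0 < real n" using n1 by simp
  have cm: "real (card {k. k \<le> m \<and> Suc k \<in> AA kk ll}) \<le> e * real m"
    by (rule mult_right_le_imp_le[OF cm0 np])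
  have mp: "0 < real m" using mpos by simp
  have "real (card {k. k \<le> m \<and> Suc k \<in> AA kk ll}) / real m \<le> e"
    using cm by (simp only: pos_divide_le_eq[OF mp])
  then show ?thesis using mM by blast
qed

lemma count_high_eps:
  assumes e: "e > 0" "e \<le> 1"
  shows "\<exists>m\<ge>M. real (card {k. k \<le> m \<and> K \<le> k \<and> Suc k \<in> AA kk ll}) / real m \<ge> 1 - e"
proof -
  obtain n0 :: nat where n0: "(real K + 1) / e < n0" using reals_Archimedean2 by blast
  define n where "n = max (max n0 (Suc (Suc M))) 1"
  have n1: "n \<ge> 1" and nM: "n \<ge> Suc (Suc M)" and nn0: "n \<ge> n0" by (auto simp: n_def)
  define m where "m = T n + kk n - 1"
  have kn: "kk n \<ge> n" using kk_pos[OF n1] .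
  have mM: "m \<ge> M" using kn nM unfolding m_def by linarith
  have mpos: "m > 0" using kn nM unfolding m_def by linarith
  have sub: "{max K (T n)..m} \<subseteq> {k. k \<le> m \<and> K \<le> k \<and> Suc k \<in> AA kk ll}"
  proof
    fix k assume "k \<in> {max K (T n)..m}"
    then have k: "K \<le> k" "T n \<le> k" "k \<le> m" by auto
    have "Suc k \<in> AA kk ll" unfolding AA_iff
    proof (rule exI[of _ n])
      show "n \<ge> 1 \<and> T n < Suc k \<and> Suc k \<le> T n + kk n"
        using n1 kn k unfolding m_def by linarith
    qed
    then show "k \<in> {k. k \<le> m \<and> K \<le> k \<and> Suc k \<in> AA kk ll}" using k by simp
  qed
  have "card {max K (T n)..m} \<le> card {k. k \<le> m \<and> K \<le> k \<and> Suc k \<in> AA kk ll}"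
    by (rule card_mono[OF _ sub]) auto
  then have c: "real m + 1 - real K - real (T n) \<le> real (card {k. k \<le> m \<and> K \<le> k \<and> Suc k \<in> AA kk ll})"
    by (simp add: card_atLeastAtMost)
  have "(real K + 1) / e < real n" using n0 nn0 by linarith
  then have ne: "real K + 1 < real n * e" using e by (simp add: field_simps)
  have m_eq: "real m + 1 = real (T n) + real n * (real (T n) + 1)"
    using kn n1 unfolding m_def kk_def by (simp add: of_nat_diff algebra_simps)
  have "(real K + 1) * (real (T n) + 1) \<le> real n * e * (real (T n) + 1)"
    using ne by (intro mult_right_mono) auto
  moreover have "real m = real (T n) + real n * (real (T n) + 1) - 1" using m_eq by linarith
  then have "e * real m = e * (real (T n) + real n * (real (T n) + 1) - 1)" by simp
  then have "e * real m = e * real (T n) + real n * e * (real (T n) + 1) - e"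
    by (simp add: algebra_simps)
  moreover have "(real K + 1) * (real (T n) + 1) \<ge> real K + real (T n) + 1"
    by (simp add: algebra_simps)
  moreover have "e * real (T n) \<ge> 0" using e by simp
  ultimately have key: "real K + real (T n) \<le> e * real m + 1"
    using e by linarith
  have "(1 - e) * real m \<le> real (card {k. k \<le> m \<and> K \<le> k \<and> Suc k \<in> AA kk ll})"
    using c key by (simp add: algebra_simps)
  then show ?thesis using mM mpos
    by (intro exI[of _ m]) (simp add: le_divide_eq)
qed



abbreviation GG where "GG \<equiv> exG kk ll"
abbreviation AS where "AS \<equiv> AA kk ll"

lemma GG_simps[simp]: "verts GG = UNIV" "edges GG = UNIV" "src GG e = e"
  "rng GG e = (if e = 0 then AS else {Suc e})"
  by (auto simp: exG_def)

lemma ss_inf: "PInf x \<in> shift_space G \<Longrightarrow> inf_path G x"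
  unfolding shift_space_def by blast
lemma ss_fin: "PFin \<alpha> A \<in> shift_space G \<Longrightarrow> min_inf_emitter G A"
  unfolding shift_space_def by blast

lemma G0_char: "B \<in> G0 GG \<Longrightarrow> finite B \<or> (\<exists>F. finite F \<and> B = AS \<union> F)"
proof (induction rule: G0.induct)
  case (sing v) then show ?case by simp
next
  case (rng e) then show ?case by (cases "e = 0") auto
next
  case (un A B)
  then show ?case
  proof (elim disjE exE conjE)
    fix F F' assume "finite F" "A = AS \<union> F" "finite F'" "B = AS \<union> F'"
    then show ?thesis by (intro disjI2 exI[of _ "F \<union> F'"]) auto
  next
    fix F assume "finite F" "A = AS \<union> F" "finite B"
    then show ?thesis by (intro disjI2 exI[of _ "F \<union> B"]) auto
  next
    fix F assume "finite F" "B = AS \<union> F" "finite A"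
    then show ?thesis by (intro disjI2 exI[of _ "A \<union> F"]) auto
  qed simp
next
  case (int A B)
  then show ?case
  proof (elim disjE exE conjE)
    fix F F' assume "finite F" "A = AS \<union> F" "finite F'" "B = AS \<union> F'"
    then show ?thesis by (intro disjI2 exI[of _ "F \<inter> F'"]) auto
  qed auto
qed

lemma AS_G0: "AS \<in> G0 GG"
  using G0.rng[of 0 GG] by simp

lemma inf_emitter_iff: "inf_emitter GG A \<longleftrightarrow> A \<in> G0 GG \<and> infinite A"
  by (simp add: inf_emitter_def)

lemma min_inf_emitter_iff: "min_inf_emitter GG A \<longleftrightarrow> A = AS"
proof
  assume m: "min_inf_emitter GG A"
  then have A: "A \<in> G0 GG" "infinite A" by (auto simp: min_inf_emitter_def inf_emitter_iff)
  then obtain F where "A = AS \<union> F" using G0_char by blast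
  then have "AS \<subseteq> A" by blast
  moreover have "\<not> AS \<subset> A"
    using m AS_G0 AA_infinite by (auto simp: min_inf_emitter_def inf_emitter_iff)
  ultimately show "A = AS" by blast
next
  assume "A = AS"
  moreover have "B \<in> G0 GG \<Longrightarrow> B \<subset> AS \<Longrightarrow> \<not> infinite B" for B
  proof
    assume "B \<in> G0 GG" "B \<subset> AS" "infinite B"
    then obtain F where "B = AS \<union> F" using G0_char by blast
    then show False using \<open>B \<subset> AS\<close> by blast
  qed
  ultimately show "min_inf_emitter GG A"
    using AS_G0 AA_infinite by (auto simp: min_inf_emitter_def inf_emitter_iff)
qed

lemma zero_notin_rng: "0 \<notin> rng GG e"
  using zero_notin by simp

lemma inf_path_form:
  assumes "inf_path GG x"
  shows "x (Suc i) = x (Suc 0) + i"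
proof (induction i)
  case (Suc i)
  have "x (Suc i) \<in> rng GG (x i)" using assms by (simp add: inf_path_def)
  then have "x (Suc i) \<noteq> 0" using zero_notin_rng by metis
  moreover have "x (Suc (Suc i)) \<in> rng GG (x (Suc i))" using assms by (simp add: inf_path_def)
  ultimately show ?case using Suc by (auto split: if_splits)
qed simp

lemma G0_countable: "countable (G0 GG)"
proof -
  have "G0 GG \<subseteq> Collect finite \<union> (\<lambda>F. AS \<union> F) ` Collect finite"
    using G0_char by blast
  moreover have "countable (Collect finite \<union> (\<lambda>F. AS \<union> F) ` Collect (finite :: nat set \<Rightarrow> bool))"
    using countable_Collect_finite by blast
  ultimately show ?thesis by (rule countable_subset)
qed

lemma shift_space_countable: "countable (shift_space GG)"
proof -
  define f :: "nat \<times> nat \<Rightarrow> (nat, nat) point" where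
    "f = (\<lambda>(a, b). PInf (\<lambda>i. case i of 0 \<Rightarrow> a | Suc j \<Rightarrow> b + j))"
  have "shift_space GG \<subseteq> range f \<union> (\<lambda>(\<alpha>, A). PFin \<alpha> A) ` ((UNIV :: nat list set) \<times> G0 GG)"
  proof
    fix z assume z: "z \<in> shift_space GG"
    show "z \<in> range f \<union> (\<lambda>(\<alpha>, A). PFin \<alpha> A) ` ((UNIV :: nat list set) \<times> G0 GG)"
    proof (cases z)
      case (PInf x)
      then have "inf_path GG x" using z ss_inf by blast
      then have hx: "(\<lambda>i. case i of 0 \<Rightarrow> x 0 | Suc j \<Rightarrow> x (Suc 0) + j) = x"
      proof -
        assume ip: "inf_path GG x"
        show ?thesis
        proof (rule ext)
          fix i show "(case i of 0 \<Rightarrow> x 0 | Suc j \<Rightarrow> x (Suc 0) + j) = x i"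
          proof (cases i)
            case (Suc j)
            have "x (Suc j) = x (Suc 0) + j" by (rule inf_path_form[OF ip])
            then show ?thesis using Suc by simp
          qed simp
        qed
      qed
      have "f (x 0, x (Suc 0)) = PInf (\<lambda>i. case i of 0 \<Rightarrow> x 0 | Suc j \<Rightarrow> x (Suc 0) + j)"
        unfolding f_def by simp
      then have "z = f (x 0, x (Suc 0))" using PInf hx by simp
      then show ?thesis by (intro UnI1) (rule image_eqI, auto)
    next
      case (PFin \<alpha> A)
      then have "min_inf_emitter GG A" using z ss_fin by blast
      then have "A \<in> G0 GG" by (simp add: min_inf_emitter_def inf_emitter_def)
      then have "z = (\<lambda>(\<alpha>, A). PFin \<alpha> A) (\<alpha>, A)" "(\<alpha>, A) \<in> UNIV \<times> G0 GG" using PFin by auto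
      then show ?thesis by (intro UnI2) (rule image_eqI)
    qed
  qed
  moreover have "countable (range f \<union> (\<lambda>(\<alpha>, A). PFin \<alpha> A) ` ((UNIV :: nat list set) \<times> G0 GG))"
    using G0_countable by (intro countable_Un countable_image countable_SIGMA) auto
  ultimately show ?thesis by (rule countable_subset)
qed

lemma ultrapaths_countable: "countable (ultrapaths GG)"
proof -
  have "ultrapaths GG \<subseteq> UVert ` G0 GG \<union> (\<lambda>(\<alpha>, A). UPath \<alpha> A) ` ((UNIV :: nat list set) \<times> G0 GG)"
    by (auto simp: ultrapaths_def)
  moreover have "countable (UVert ` G0 GG \<union> (\<lambda>(\<alpha>, A). UPath \<alpha> A) ` ((UNIV :: nat list set) \<times> G0 GG))"
    using G0_countable by (intro countable_Un countable_image countable_SIGMA) auto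
  ultimately show ?thesis by (rule countable_subset)
qed

lemma ultrapaths_infinite: "infinite (ultrapaths GG)"
proof
  assume "finite (ultrapaths GG)"
  moreover have "UVert {v} \<in> ultrapaths GG" for v :: nat
  proof -
    have "{v} \<in> G0 GG" by (rule G0.sing) simp
    then show ?thesis unfolding ultrapaths_def by blast
  qed
  then have "(\<lambda>v::nat. UVert {v}) ` UNIV \<subseteq> ultrapaths GG" by blast
  ultimately have "finite ((\<lambda>v::nat. (UVert {v} :: (nat, nat) upath)) ` UNIV)" by (rule finite_subset[rotated])
  moreover have "inj (\<lambda>v::nat. (UVert {v} :: (nat, nat) upath))" by (auto simp: inj_def)
  ultimately show False using finite_imageD by blast
qed

lemma enumeration_exists: "\<exists>p. enumeration GG p"
proof -
  obtain e :: "(nat, nat) upath \<Rightarrow> nat" where e: "bij_betw e (ultrapaths GG) UNIV"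
    using countableE_infinite[OF ultrapaths_countable ultrapaths_infinite] by blast
  have b1: "bij_betw (\<lambda>i::nat. i - 1) {1..} UNIV"
    unfolding bij_betw_def inj_on_def
  proof (intro conjI ballI impI)
    show "(\<lambda>i::nat. i - 1) ` {1..} = UNIV"
    proof (rule set_eqI, rule iffI)
      fix x :: nat show "x \<in> (\<lambda>i. i - 1) ` {1..}" by (rule image_eqI[of _ _ "Suc x"]) auto
    qed simp
  qed auto
  have "bij_betw (inv_into (ultrapaths GG) e \<circ> (\<lambda>i. i - 1)) {1..} (ultrapaths GG)"
    by (rule bij_betw_trans[OF b1 bij_betw_inv_into[OF e]])
  then show ?thesis unfolding enumeration_def by blast
qed



lemma shift_x: "(ushift ^^ k) (PInf Suc) = PInf (\<lambda>i. i + Suc k)"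
  by (induction k) auto

lemma shift_y: "(ushift ^^ k) (PFin [] A) = PFin [] A"
  by (induction k) auto

abbreviation XX :: "nat \<Rightarrow> (nat, nat) point" where "XX k \<equiv> PInf (\<lambda>i. i + Suc k)"
abbreviation YY :: "(nat, nat) point" where "YY \<equiv> PFin [] AS"

definition dis :: "(nat, nat) upath \<Rightarrow> nat \<Rightarrow> bool" where
  "dis q k \<longleftrightarrow> is_init GG q (XX k) \<noteq> is_init GG q YY"

fun bnd :: "(nat, nat) upath \<Rightarrow> nat" where
  "bnd (UVert A) = (if finite A then Suc (Max (insert 0 A)) else 0)"
| "bnd (UPath \<alpha> A) = Suc (hd \<alpha>)"

lemma udist_XY: "udist GG p (XX k) YY = (1/2) ^ (LEAST i. 1 \<le> i \<and> dis (p i) k)"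
  by (simp add: udist_def dis_def)

lemma enum_surj: "enumeration GG p \<Longrightarrow> q \<in> ultrapaths GG \<Longrightarrow> \<exists>i\<ge>1. p i = q"
  unfolding enumeration_def bij_betw_def by (metis atLeast_iff imageE)

lemma enum_in: "enumeration GG p \<Longrightarrow> 1 \<le> i \<Longrightarrow> p i \<in> ultrapaths GG"
  unfolding enumeration_def bij_betw_def by auto

lemma AS_not_sub_finite: "finite A \<Longrightarrow> \<not> AS \<subseteq> A"
  using AA_infinite finite_subset by blast

lemma ex_dis:
  assumes "enumeration GG p"
  shows "\<exists>i. 1 \<le> i \<and> dis (p i) k"
proof -
  have "{Suc k} \<in> G0 GG" by (rule G0.sing) simp
  then have "UVert {Suc k} \<in> ultrapaths GG" unfolding ultrapaths_def by blast
  then obtain i where "i \<ge> 1" "p i = UVert {Suc k}" using enum_surj[OF assms] by blast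
  moreover have "dis (UVert {Suc k}) k"
    using AS_not_sub_finite[of "{Suc k}"] by (simp add: dis_def)
  ultimately show ?thesis by auto
qed

lemma far:
  assumes "enumeration GG p" "p j0 = UVert AS" "1 \<le> j0" "Suc k \<notin> AS"
  shows "(1/2) ^ j0 \<le> udist GG p (XX k) YY"
proof -
  have "dis (p j0) k" using assms(2,4) by (simp add: dis_def)
  then have "(LEAST i. 1 \<le> i \<and> dis (p i) k) \<le> j0" using assms(3) by (intro Least_le) simp
  then show ?thesis unfolding udist_XY by (intro power_decreasing) auto
qed

lemma no_dis:
  assumes q: "q \<in> ultrapaths GG" and b: "bnd q \<le> k" and s: "Suc k \<in> AS"
  shows "\<not> dis q k"
proof (cases q)
  case (UVert A)
  then have A: "A \<in> G0 GG" using q by (auto simp: ultrapaths_def)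
  show ?thesis
  proof (cases "finite A")
    case True
    have m: "Suc (Max (insert 0 A)) \<le> k" using b UVert True by simp
    have "Suc k \<notin> A"
    proof
      assume "Suc k \<in> A"
      then have "Suc k \<le> Max (insert 0 A)" using True by simp
      then show False using m by simp
    qed
    then show ?thesis using UVert AS_not_sub_finite[OF True] by (simp add: dis_def)
  next
    case False
    then obtain F where "A = AS \<union> F" using G0_char[OF A] by blast
    then show ?thesis using UVert s by (auto simp: dis_def)
  qed
next
  case (UPath \<alpha> A)
  then have ne: "\<alpha> \<noteq> []" using q by (auto simp: ultrapaths_def fin_path_def)
  then obtain a \<alpha>' where a: "\<alpha> = a # \<alpha>'" by (cases \<alpha>) auto
  have "\<not> is_init GG (UPath \<alpha> A) YY" using a by auto
  moreover have "\<not> is_init GG (UPath \<alpha> A) (XX k)"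
  proof
    assume "is_init GG (UPath \<alpha> A) (XX k)"
    then have "Suc k = a" using a by auto
    then show False using b UPath a by simp
  qed
  ultimately show ?thesis using UPath by (simp add: dis_def)
qed

lemma near:
  assumes e: "enumeration GG p" and d: "\<delta> > 0"
  shows "\<exists>K. \<forall>k\<ge>K. Suc k \<in> AS \<longrightarrow> udist GG p (XX k) YY < \<delta>"
proof -
  obtain N where N: "(1/2::real) ^ N < \<delta>" using real_arch_pow_inv[OF d, of "1/2"] by auto
  define K where "K = (\<Sum>i\<in>{1..N}. bnd (p i))"
  have "udist GG p (XX k) YY < \<delta>" if k: "k \<ge> K" "Suc k \<in> AS" for k
  proof -
    define L where "L = (LEAST i. 1 \<le> i \<and> dis (p i) k)"
    have PL: "1 \<le> L \<and> dis (p L) k" unfolding L_def by (rule LeastI_ex[OF ex_dis[OF e]])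
    have "N < L"
    proof (rule ccontr)
      assume "\<not> N < L"
      then have "L \<in> {1..N}" using PL by auto
      then have "bnd (p L) \<le> K" unfolding K_def by (intro member_le_sum) auto
      then have "\<not> dis (p L) k" using no_dis[OF enum_in[OF e] _ k(2)] PL k(1) by auto
      then show False using PL by simp
    qed
    then have le: "(1/2::real) ^ L \<le> (1/2) ^ N" by (intro power_decreasing) auto
    have "udist GG p (XX k) YY = (1/2) ^ L" unfolding udist_XY L_def by simp
    then show ?thesis using N le by linarith
  qed
  then show ?thesis by blast
qed



lemma limsup_one:
  fixes a :: "nat \<Rightarrow> real"
  assumes ub: "\<And>n. a n \<le> real (Suc n) / real n"
    and fr: "\<And>e M. e > 0 \<Longrightarrow> \<exists>m\<ge>M. a m \<ge> 1 - e"
  shows "limsup (\<lambda>n. ereal (a n)) = 1"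
proof (rule antisym)
  have "limsup (\<lambda>n. ereal (a n)) \<le> limsup (\<lambda>n. ereal (real (Suc n) / real n))"
    by (rule Limsup_mono) (use ub in auto)
  also have "\<dots> = 1"
  proof (rule lim_imp_Limsup)
    show "((\<lambda>n. ereal (real (Suc n) / real n)) \<longlongrightarrow> 1) sequentially"
      using LIMSEQ_Suc_n_over_n[where 'a=real] by (simp add: one_ereal_def tendsto_ereal)
  qed simp
  finally show "limsup (\<lambda>n. ereal (a n)) \<le> 1" .
next
  show "1 \<le> limsup (\<lambda>n. ereal (a n))"
  proof (rule ereal_le_epsilon2)
    fix e :: real assume e: "0 < e"
    have "ereal (1 - e) \<le> limsup (\<lambda>n. ereal (a n))"
      unfolding limsup_INF_SUP
    proof (rule INF_greatest)
      fix M :: nat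
      obtain m where "m \<ge> M" "a m \<ge> 1 - e" using fr e by blast
      then show "ereal (1 - e) \<le> (SUP m\<in>{M..}. ereal (a m))"
        by (intro SUP_upper2[of m]) auto
    qed
    then show "1 \<le> limsup (\<lambda>n. ereal (a n)) + ereal e"
      by (cases "limsup (\<lambda>n. ereal (a n))") auto
  qed
qed

lemma liminf_zero:
  fixes a :: "nat \<Rightarrow> real"
  assumes nn: "\<And>n. 0 \<le> a n"
    and fr: "\<And>e M. e > 0 \<Longrightarrow> \<exists>m\<ge>M. a m \<le> e"
  shows "liminf (\<lambda>n. ereal (a n)) = 0"
proof (rule antisym)
  show "liminf (\<lambda>n. ereal (a n)) \<le> 0"
  proof (rule ereal_le_epsilon2)
    fix e :: real assume e: "0 < e"
    have "liminf (\<lambda>n. ereal (a n)) \<le> ereal e"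
      unfolding liminf_SUP_INF
    proof (rule SUP_least)
      fix M :: nat
      obtain m where "m \<ge> M" "a m \<le> e" using fr e by blast
      then show "(INF m\<in>{M..}. ereal (a m)) \<le> ereal e"
        by (intro INF_lower2[of m]) auto
    qed
    then show "liminf (\<lambda>n. ereal (a n)) \<le> 0 + ereal e" by simp
  qed
next
  show "0 \<le> liminf (\<lambda>n. ereal (a n))"
    unfolding liminf_SUP_INF
    by (rule SUP_upper2[of 0]) (auto intro!: INF_greatest simp: nn)
qed


lemma Phi_eq: "Phi GG p n \<delta> (PInf Suc) YY = real (card {k. k \<le> n \<and> udist GG p (XX k) YY < \<delta>}) / real n"
  unfolding Phi_def shift_x shift_y by simp

lemma card_le_Suc: "card {k. k \<le> n \<and> P k} \<le> Suc n"
proof -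
  have "card {k. k \<le> n \<and> P k} \<le> card {..n}" by (rule card_mono) auto
  then show ?thesis by simp
qed

lemma DC1_main:
  assumes e: "enumeration GG p"
  shows "DC1_pair GG p (PInf Suc) YY"
  unfolding DC1_pair_def
proof (intro conjI allI impI)
  fix \<delta> :: real assume d: "\<delta> > 0"
  obtain K where K: "\<And>k. k \<ge> K \<Longrightarrow> Suc k \<in> AS \<Longrightarrow> udist GG p (XX k) YY < \<delta>"
    using near[OF e d] by blast
  show "limsup (\<lambda>n. ereal (Phi GG p n \<delta> (PInf Suc) YY)) = 1"
  proof (rule limsup_one)
    fix n
    show "Phi GG p n \<delta> (PInf Suc) YY \<le> real (Suc n) / real n"
    proof -
      have "card {k. k \<le> n \<and> udist GG p (XX k) YY < \<delta>} \<le> Suc n" by (rule card_le_Suc)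
      then have "real (card {k. k \<le> n \<and> udist GG p (XX k) YY < \<delta>}) \<le> real (Suc n)"
        by (simp only: of_nat_le_iff)
      then show ?thesis unfolding Phi_eq by (rule divide_right_mono) simp
    qed
  next
    fix \<epsilon> :: real and M :: nat assume eps: "\<epsilon> > 0"
    obtain m where m: "m \<ge> M"
      "real (card {k. k \<le> m \<and> K \<le> k \<and> Suc k \<in> AS}) / real m \<ge> 1 - min \<epsilon> 1"
      using count_high_eps[of "min \<epsilon> 1" M K] eps by auto
    have "card {k. k \<le> m \<and> K \<le> k \<and> Suc k \<in> AS} \<le> card {k. k \<le> m \<and> udist GG p (XX k) YY < \<delta>}"
    proof (rule card_mono)
      show "{k. k \<le> m \<and> K \<le> k \<and> Suc k \<in> AS} \<subseteq> {k. k \<le> m \<and> udist GG p (XX k) YY < \<delta>}"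
      proof
        fix k assume k: "k \<in> {k. k \<le> m \<and> K \<le> k \<and> Suc k \<in> AS}"
        then have "udist GG p (XX k) YY < \<delta>" by (intro K) auto
        then show "k \<in> {k. k \<le> m \<and> udist GG p (XX k) YY < \<delta>}" using k by blast
      qed
    qed auto
    then have "real (card {k. k \<le> m \<and> K \<le> k \<and> Suc k \<in> AS}) / real m \<le> Phi GG p m \<delta> (PInf Suc) YY"
      unfolding Phi_eq by (intro divide_right_mono) auto
    then show "\<exists>m\<ge>M. Phi GG p m \<delta> (PInf Suc) YY \<ge> 1 - \<epsilon>" using m by (intro exI[of _ m]) auto
  qed
next
  have "AS \<in> G0 GG" by (rule AS_G0)
  then have "UVert AS \<in> ultrapaths GG" unfolding ultrapaths_def by blast
  then obtain j0 where j0: "j0 \<ge> 1" "p j0 = UVert AS" using enum_surj[OF e] by blast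
  show "\<exists>\<delta>0>0. liminf (\<lambda>n. ereal (Phi GG p n \<delta>0 (PInf Suc) YY)) = 0"
  proof (intro exI conjI)
    show "(1/2::real) ^ j0 > 0" by simp
    show "liminf (\<lambda>n. ereal (Phi GG p n ((1/2) ^ j0) (PInf Suc) YY)) = 0"
    proof (rule liminf_zero)
      fix n show "0 \<le> Phi GG p n ((1/2) ^ j0) (PInf Suc) YY" unfolding Phi_eq by simp
    next
      fix \<epsilon> :: real and M :: nat assume eps: "\<epsilon> > 0"
      obtain m where m: "m \<ge> M"
        "real (card {k. k \<le> m \<and> Suc k \<in> AS}) / real m \<le> \<epsilon>"
        using count_low_eps[OF eps, of M] by auto
      have "card {k. k \<le> m \<and> udist GG p (XX k) YY < (1/2) ^ j0} \<le> card {k. k \<le> m \<and> Suc k \<in> AS}"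
      proof (rule card_mono)
        show "{k. k \<le> m \<and> udist GG p (XX k) YY < (1/2) ^ j0} \<subseteq> {k. k \<le> m \<and> Suc k \<in> AS}"
          using far[OF e j0(2) j0(1)] by force
      qed auto
      then have "Phi GG p m ((1/2) ^ j0) (PInf Suc) YY \<le> real (card {k. k \<le> m \<and> Suc k \<in> AS}) / real m"
        unfolding Phi_eq by (intro divide_right_mono) auto
      then show "\<exists>m\<ge>M. Phi GG p m ((1/2) ^ j0) (PInf Suc) YY \<le> \<epsilon>" using m by (intro exI[of _ m]) auto
    qed
  qed
qed

theorem mainTheorem10:
  shows "\<exists>k l :: nat \<Rightarrow> nat. (\<forall>n\<ge>1. 0 < k n \<and> 0 < l n) \<and>
     is_ultragraph (exG k l) \<and> no_sinks (exG k l) \<and>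
     countable (shift_space (exG k l)) \<and>
     (\<exists>p. enumeration (exG k l) p \<and>
        PInf Suc \<in> shift_space (exG k l) \<and> PFin [] (AA k l) \<in> shift_space (exG k l) \<and>
        DC1_pair (exG k l) p (PInf Suc) (PFin [] (AA k l)) \<and>
        (\<forall>S \<subseteq> shift_space (exG k l). DC1_set (exG k l) p S \<longrightarrow> countable S) \<and>
        \<not> li_yorke_chaotic (exG k l) p)"
proof -
  obtain p where e: "enumeration GG p" using enumeration_exists by blast
  show ?thesis
proof (intro exI conjI)
  show "\<forall>n\<ge>1. 0 < kk n \<and> 0 < ll n"
  proof (intro allI impI)
    fix n :: nat assume "n \<ge> 1"
    then show "0 < kk n \<and> 0 < ll n" using kk_pos[of n] ll_pos[of n] by linarith
  qed
  have "AS \<noteq> {}" using AA_infinite by auto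
  then show "is_ultragraph GG" by (simp add: is_ultragraph_def)
  show "no_sinks GG" by (simp add: no_sinks_def)
  show cs: "countable (shift_space GG)" by (rule shift_space_countable)
  show "enumeration GG p" by (rule e)
  have "inf_path GG Suc" by (simp add: inf_path_def)
  then show "PInf Suc \<in> shift_space GG" unfolding shift_space_def by blast
  have "min_inf_emitter GG AS" by (simp add: min_inf_emitter_iff)
  then show "YY \<in> shift_space GG" unfolding shift_space_def by blast
  show "DC1_pair GG p (PInf Suc) YY" by (rule DC1_main[OF e])
  show "\<forall>S \<subseteq> shift_space GG. DC1_set GG p S \<longrightarrow> countable S"
    using cs countable_subset by blast
  show "\<not> li_yorke_chaotic GG p"
    unfolding li_yorke_chaotic_def using cs countable_subset by blast
qed
qed


end
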